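(* Let $a,b,c\in\mathbb{R}$, $\lambda>0$, and consider the scalar linear jump-diffusion test equation $$dX(t)=aX(t^-)\,dt+bX(t^-)\,dW(t)+cX(t^-)\,dN(t),\qquad X(0)=X_0,$$ with $\mathbb{E}|X_0|^2<\infty$. Let $l:=2a+b^2+\lambda c(2+c)$ and assume $l<0$. Consider the (non-compensated) tamed Euler scheme applied to this equation, $$X_{n+1}=X_n+\frac{aX_n\Delta t}{1+\Delta t|aX_n|}+bX_n\Delta W_n+cX_n\Delta N_n,\qquad X_0 \text{ given}.$$ This scheme is mean-square stable (i.e. $\lim_{n\to\infty}\mathbb{E}(X_n^2)=0$) if one of the following conditions holds: (i) $a(1+\lambda c\Delta t)\le 0$, $2a-l>0$ and $\Delta t<\dfrac{2a-l}{a^2+\lambda^2c^2}$; (ii) $a(1+\lambda c\Delta t)>0$ and $\Delta t<\dfrac{-l}{(a+\lambda c)^2}$.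
   Context: $(\Omega,\mathcal F,\mathbb P)$ is a complete probability space with filtration $(\mathcal F_t)_{t\ge0}$; $W$ is a one-dimensional standard Brownian motion and $N$ is a Poisson process with intensity $\lambda$, independent of $W$ (and of $X_0$). $\Delta t>0$ is the step size, $t_n=n\Delta t$, $\Delta W_n=W(t_{n+1})-W(t_n)$, $\Delta N_n=N(t_{n+1})-N(t_n)$. The condition $l<0$ is equivalent to mean-square stability of the exact solution. *)

theory Defs
  imports "HOL-Probability.Probability"
begin

definition std_brownian_motion :: "'a measure \<Rightarrow> (real \<Rightarrow> 'a \<Rightarrow> real) \<Rightarrow> bool" where
  "std_brownian_motion M W \<longleftrightarrow>
     (\<forall>t\<ge>0. W t \<in> borel_measurable M) \<and>
     (AE \<omega> in M. W 0 \<omega> = 0) \<and>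
     (AE \<omega> in M. continuous_on {0..} (\<lambda>t. W t \<omega>)) \<and>
     (\<forall>s t. 0 \<le> s \<and> s < t \<longrightarrow>
        distributed M lborel (\<lambda>\<omega>. W t \<omega> - W s \<omega>) (normal_density 0 (sqrt (t - s))))"

definition poisson_process :: "'a measure \<Rightarrow> real \<Rightarrow> (real \<Rightarrow> 'a \<Rightarrow> real) \<Rightarrow> bool" where
  "poisson_process M lam N \<longleftrightarrow>
     (\<forall>t\<ge>0. N t \<in> borel_measurable M) \<and>
     (AE \<omega> in M. N 0 \<omega> = 0) \<and>
     (AE \<omega> in M. mono_on {0..} (\<lambda>t. N t \<omega>) \<and>
                  (\<forall>t\<ge>0. continuous (at_right t) (\<lambda>t. N t \<omega>))) \<and>
     (\<forall>s t. 0 \<le> s \<and> s < t \<longrightarrow>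
        distr M borel (\<lambda>\<omega>. N t \<omega> - N s \<omega>)
          = distr (measure_pmf (poisson_pmf (lam * (t - s)))) borel real)"

text \<open>This encodes independent
  increments of W and N and independence of W, N and X0.\<close>
definition indep_X0_W_N ::
  "'a measure \<Rightarrow> ('a \<Rightarrow> real) \<Rightarrow> (real \<Rightarrow> 'a \<Rightarrow> real) \<Rightarrow> (real \<Rightarrow> 'a \<Rightarrow> real) \<Rightarrow> bool" where
  "indep_X0_W_N M X0 W N \<longleftrightarrow>
     (\<forall>ts :: real list. sorted ts \<and> distinct ts \<and> (\<forall>t\<in>set ts. 0 \<le> t) \<longrightarrow>
        prob_space.indep_vars M (\<lambda>_. borel)
          (\<lambda>i. case i of None \<Rightarrow> X0
                | Some (False, k) \<Rightarrow> (\<lambda>\<omega>. W (ts ! Suc k) \<omega> - W (ts ! k) \<omega>)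
                | Some (True, k) \<Rightarrow> (\<lambda>\<omega>. N (ts ! Suc k) \<omega> - N (ts ! k) \<omega>))
          (insert None {Some (b, k) | b k. Suc k < length ts}))"

fun tamed_euler ::
  "real \<Rightarrow> real \<Rightarrow> real \<Rightarrow> real \<Rightarrow> ('a \<Rightarrow> real) \<Rightarrow> (real \<Rightarrow> 'a \<Rightarrow> real) \<Rightarrow> (real \<Rightarrow> 'a \<Rightarrow> real)
   \<Rightarrow> nat \<Rightarrow> 'a \<Rightarrow> real" where
  "tamed_euler a b c dt X0 W N 0 \<omega> = X0 \<omega>"
| "tamed_euler a b c dt X0 W N (Suc n) \<omega> =
     (let x = tamed_euler a b c dt X0 W N n \<omega>;
          dW = W (real (Suc n) * dt) \<omega> - W (real n * dt) \<omega>;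
          dN = N (real (Suc n) * dt) \<omega> - N (real n * dt) \<omega>
      in x + a * x * dt / (1 + dt * \<bar>a * x\<bar>) + b * x * dW + c * x * dN)"

end

theory Submission
  imports Defs
begin


lemma poisson_Suc:
  assumes r: "r > 0"
  shows "pmf (poisson_pmf r) (Suc n) * real (Suc n) = r * pmf (poisson_pmf r) n"
proof -
  have "fact (Suc n) = real (Suc n) * fact n" by (simp add: fact_Suc)
  then show ?thesis using r by (simp del: of_nat_Suc fact_Suc)
qed

lemma poisson_sums1:
  assumes r: "r > 0"
  shows "(\<lambda>k. pmf (poisson_pmf r) k * real k) sums (r::real)"
proof -
  have e: "(\<lambda>n. r^n / fact n) sums exp r" using exp_converges[of r] by (simp add: divide_inverse mult.commute)
  have "(\<lambda>n. (r * exp (-r)) * (r^n / fact n)) sums ((r * exp (-r)) * exp r)"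
    by (rule sums_mult[OF e])
  also have "(r * exp (-r)) * exp r = r" by (simp add: mult.assoc exp_minus field_simps)
  finally have s: "(\<lambda>n. (r * exp (-r)) * (r^n / fact n)) sums r" .
  have "(\<lambda>n. pmf (poisson_pmf r) (Suc n) * real (Suc n)) = (\<lambda>n. (r * exp (-r)) * (r^n / fact n))"
    using r by (auto simp: fun_eq_iff poisson_Suc)
  with s have "(\<lambda>n. pmf (poisson_pmf r) (Suc n) * real (Suc n)) sums r" by simp
  then show ?thesis by (subst (asm) sums_Suc_iff) simp
qed

lemma poisson_sums2:
  assumes r: "r > 0"
  shows "(\<lambda>k. pmf (poisson_pmf r) k * (real k)^2) sums (r + r^2::real)"
proof -
  have e: "(\<lambda>n. r^n / fact n) sums exp r" using exp_converges[of r] by (simp add: divide_inverse mult.commute)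
  have e1: "(\<lambda>n. (r * exp (-r)) * (r^n / fact n)) sums ((r * exp (-r)) * exp r)"
    by (rule sums_mult[OF e])
  have e2: "(\<lambda>n. r * (pmf (poisson_pmf r) n * real n)) sums (r * r)"
    by (rule sums_mult[OF poisson_sums1[OF r]])
  have "(\<lambda>n. (r * exp (-r)) * (r^n / fact n) + r * (pmf (poisson_pmf r) n * real n)) sums ((r * exp (-r)) * exp r + r * r)"
    by (rule sums_add[OF e1 e2])
  also have "(r * exp (-r)) * exp r + r * r = r + r^2" by (simp add: mult.assoc exp_minus field_simps power2_eq_square)
  finally have s: "(\<lambda>n. (r * exp (-r)) * (r^n / fact n) + r * (pmf (poisson_pmf r) n * real n)) sums (r + r^2)" .
  have "(\<lambda>n. pmf (poisson_pmf r) (Suc n) * (real (Suc n))^2) = (\<lambda>n. (r * exp (-r)) * (r^n / fact n) + r * (pmf (poisson_pmf r) n * real n))"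
  proof
    fix n
    have "pmf (poisson_pmf r) (Suc n) * (real (Suc n))^2 = r * pmf (poisson_pmf r) n * real (Suc n)"
      using poisson_Suc[OF r, of n] by (simp add: power2_eq_square del: of_nat_Suc)
    also have "\<dots> = (r * exp (-r)) * (r^n / fact n) + r * (pmf (poisson_pmf r) n * real n)"
      using r by (simp add: algebra_simps add_divide_distrib)
    finally show "pmf (poisson_pmf r) (Suc n) * (real (Suc n))^2 = (r * exp (-r)) * (r^n / fact n) + r * (pmf (poisson_pmf r) n * real n)" .
  qed
  with s have "(\<lambda>n. pmf (poisson_pmf r) (Suc n) * (real (Suc n))^2) sums (r + r^2)" by simp
  then show ?thesis by (subst (asm) sums_Suc_iff) simp
qed

lemma pmf_nat_integral:
  fixes f :: "nat \<Rightarrow> real"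
  assumes nn: "\<And>k. f k \<ge> 0" and s: "(\<lambda>k. pmf p k * f k) sums S"
  shows "integrable (measure_pmf p) f" "integral\<^sup>L (measure_pmf p) f = S"
proof -
  have i: "integrable (count_space UNIV) (\<lambda>k. pmf p k * f k)"
    unfolding integrable_count_space_nat_iff using s nn
    by (simp add: sums_summable abs_mult pmf_nonneg)
  show "integrable (measure_pmf p) f"
    unfolding measure_pmf_eq_density using i
    by (subst integrable_density) (auto simp: pmf_nonneg)
  show "integral\<^sup>L (measure_pmf p) f = S"
    unfolding measure_pmf_eq_density
    by (subst integral_density) (auto simp: pmf_nonneg integral_count_space_nat[OF i] sums_unique[OF s])
qed



lemma convex_sq: "0 \<le> t \<Longrightarrow> t \<le> 1 \<Longrightarrow> (s + t * d)^2 \<le> (1 - t) * s^2 + t * (s + d)^2" for s t d :: real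
proof -
  assume "0 \<le> t" "t \<le> 1"
  then have "0 \<le> t * (1 - t) * d^2" by simp
  moreover have "(1 - t) * s^2 + t * (s + d)^2 - (s + t * d)^2 = t * (1 - t) * d^2"
    by (simp add: power2_eq_square algebra_simps)
  ultimately show ?thesis by linarith
qed

lemma contraction:
  fixes a b c lam dt :: real
  defines "l \<equiv> 2 * a + b\<^sup>2 + lam * c * (2 + c)"
  defines "R \<equiv> \<lambda>\<theta>. (1 + \<theta> + c * lam * dt)^2 + b^2 * dt + c^2 * lam * dt"
  assumes lam: "lam > 0" and dt: "dt > 0"
    and cases: "(a * (1 + lam * c * dt) \<le> 0 \<and>
          2 * a - (2 * a + b\<^sup>2 + lam * c * (2 + c)) > 0 \<and>
          dt < (2 * a - (2 * a + b\<^sup>2 + lam * c * (2 + c))) / (a\<^sup>2 + lam\<^sup>2 * c\<^sup>2))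
       \<or> (a * (1 + lam * c * dt) > 0 \<and>
          dt < - (2 * a + b\<^sup>2 + lam * c * (2 + c)) / (a + lam * c)\<^sup>2)"
  shows "R 0 < 1" "R (a * dt) < 1"
proof -
  have R0: "R 0 = 1 + dt * (l - 2 * a) + c^2 * lam^2 * dt^2"
    unfolding R_def l_def by (simp add: power2_eq_square algebra_simps)
  have R1: "R (a * dt) = 1 + dt * l + (a + lam * c)^2 * dt^2"
    unfolding R_def l_def by (simp add: power2_eq_square algebra_simps)
  have "R 0 < 1 \<and> R (a * dt) < 1"
    using cases unfolding l_def[symmetric]
  proof
    assume h: "a * (1 + lam * c * dt) \<le> 0 \<and> 2 * a - l > 0 \<and> dt < (2 * a - l) / (a\<^sup>2 + lam\<^sup>2 * c\<^sup>2)"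
    have pos: "a\<^sup>2 + lam\<^sup>2 * c\<^sup>2 > 0"
    proof (rule ccontr)
      assume "\<not> ?thesis"
      then have "a\<^sup>2 + lam\<^sup>2 * c\<^sup>2 = 0" by (smt (verit) zero_le_power2 mult_nonneg_nonneg)
      with h dt show False by simp
    qed
    with h have k: "dt * (a\<^sup>2 + lam\<^sup>2 * c\<^sup>2) < 2 * a - l" by (simp add: pos_less_divide_eq mult.commute)
    have "dt * (c^2 * lam^2 * dt) \<le> dt * (dt * (a\<^sup>2 + lam\<^sup>2 * c\<^sup>2))"
      using dt by (intro mult_left_mono) (auto simp: algebra_simps)
    also have "\<dots> < dt * (2 * a - l)" using k dt by simp
    finally have 1: "R 0 < 1" unfolding R0 by (simp add: power2_eq_square algebra_simps)
    have "dt * ((a + lam * c)^2 * dt) = dt * (dt * (a\<^sup>2 + lam\<^sup>2 * c\<^sup>2)) + dt * (2 * a * (lam * c * dt))"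
      by (simp add: power2_eq_square algebra_simps)
    also have "\<dots> < dt * (2 * a - l) + dt * (2 * a * (lam * c * dt))"
      using k dt by simp
    also have "\<dots> = dt * (- l) + dt * (2 * (a * (1 + lam * c * dt)))" by (simp add: algebra_simps)
    also have "\<dots> \<le> dt * (- l)" using h dt by (simp add: mult_nonpos_nonneg mult_le_0_iff)
    finally have 2: "R (a * dt) < 1" unfolding R1 by (simp add: power2_eq_square algebra_simps)
    from 1 2 show ?thesis ..
  next
    assume h: "a * (1 + lam * c * dt) > 0 \<and> dt < - l / (a + lam * c)\<^sup>2"
    have pos: "(a + lam * c)\<^sup>2 > 0"
    proof (rule ccontr)
      assume "\<not> ?thesis"
      then have "(a + lam * c)\<^sup>2 = 0" by (smt (verit) zero_le_power2)
      with h dt show False by simp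
    qed
    from h have "dt < (- l) / (a + lam * c)\<^sup>2" by simp
    then have k: "dt * (a + lam * c)\<^sup>2 < - l" using pos by (simp only: pos_less_divide_eq)
    have "dt * ((a + lam * c)\<^sup>2 * dt) < dt * (- l)" using mult_strict_left_mono[OF k dt] by (simp add: mult.commute)
    then have 2: "R (a * dt) < 1" unfolding R1 by (simp add: power2_eq_square algebra_simps)
    have "R 0 - R (a * dt) = - (dt * (2 * (a * (1 + lam * c * dt)) + a^2 * dt))"
      unfolding R_def by (simp add: power2_eq_square algebra_simps)
    also have "\<dots> < 0" using h dt by (simp add: add_pos_nonneg)
    finally have "R 0 < 1" using 2 by simp
    with 2 show ?thesis by simp
  qed
  then show "R 0 < 1" "R (a * dt) < 1" by auto
qed



definition incr :: "('a \<Rightarrow> real) \<Rightarrow> (real \<Rightarrow> 'a \<Rightarrow> real) \<Rightarrow> (real \<Rightarrow> 'a \<Rightarrow> real) \<Rightarrow> real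
   \<Rightarrow> (bool \<times> nat) option \<Rightarrow> 'a \<Rightarrow> real" where
  "incr X0 W N dt i = (case i of None \<Rightarrow> X0
      | Some (False, k) \<Rightarrow> (\<lambda>\<omega>. W (real (Suc k) * dt) \<omega> - W (real k * dt) \<omega>)
      | Some (True, k) \<Rightarrow> (\<lambda>\<omega>. N (real (Suc k) * dt) \<omega> - N (real k * dt) \<omega>))"

fun evs :: "real \<Rightarrow> real \<Rightarrow> real \<Rightarrow> real \<Rightarrow> ((bool \<times> nat) option \<Rightarrow> real) \<Rightarrow> nat \<Rightarrow> real" where
  "evs a b c dt v 0 = v None"
| "evs a b c dt v (Suc n) = (let x = evs a b c dt v n in
      x + a * x * dt / (1 + dt * \<bar>a * x\<bar>) + b * x * v (Some (False, n)) + c * x * v (Some (True, n)))"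

lemma tamed_eq: "tamed_euler a b c dt X0 W N n \<omega> = evs a b c dt (\<lambda>i. incr X0 W N dt i \<omega>) n"
  by (induction n) (simp_all add: incr_def Let_def)

definition Jset :: "nat \<Rightarrow> (bool \<times> nat) option set" where
  "Jset n = insert None {Some (b, k) | b k. k < n}"

lemma Jset_mono: "m \<le> n \<Longrightarrow> Jset m \<subseteq> Jset n"
  by (auto simp: Jset_def)

lemma Jset_Suc: "Jset n \<subseteq> J \<Longrightarrow> Jset (Suc n) \<subseteq> J \<Longrightarrow> Some (b, n) \<in> J"
  by (auto simp: Jset_def)

lemma evs_restrict: "Jset n \<subseteq> J \<Longrightarrow> evs a b c dt (restrict v J) n = evs a b c dt v n"
proof (induction n)
  case 0 then show ?case by (simp add: Jset_def)
next
  case (Suc n)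
  have J: "Jset n \<subseteq> J" using Suc.prems Jset_mono[of n "Suc n"] by auto
  have "Some (False, n) \<in> J" "Some (True, n) \<in> J" using Suc.prems by (auto simp: Jset_def)
  then show ?case using Suc.IH[OF J] by (simp add: Let_def)
qed

lemma evs_meas: "Jset n \<subseteq> J \<Longrightarrow> (\<lambda>v. evs a b c dt v n) \<in> borel_measurable (PiM J (\<lambda>_. borel))"
proof (induction n)
  case 0 then have "None \<in> J" by (simp add: Jset_def)
  then show ?case by simp
next
  case (Suc n)
  have J: "Jset n \<subseteq> J" using Suc.prems Jset_mono[of n "Suc n"] by auto
  have [measurable]: "Some (False, n) \<in> J" "Some (True, n) \<in> J" using Suc.prems by (auto simp: Jset_def)
  note IH[measurable] = Suc.IH[OF J]
  show ?case by (simp add: Let_def) measurable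
qed

lemma grid_indep:
  assumes ps: "prob_space M" and dt: "dt > 0" and ind: "indep_X0_W_N M X0 W N"
  shows "prob_space.indep_vars M (\<lambda>_. borel) (incr X0 W N dt) (Jset (Suc n))"
proof -
  define ts where "ts = map (\<lambda>k. real k * dt) [0..<n+2]"
  have "sorted ts" unfolding ts_def using dt
    unfolding sorted_iff_nth_mono by (auto simp del: upt_Suc intro!: mult_right_mono)
  moreover have "distinct ts" unfolding ts_def using dt
    by (auto simp: distinct_map inj_on_def)
  moreover have "\<forall>t\<in>set ts. 0 \<le> t" unfolding ts_def using dt by auto
  ultimately have i: "prob_space.indep_vars M (\<lambda>_. borel)
          (\<lambda>i. case i of None \<Rightarrow> X0
                | Some (False, k) \<Rightarrow> (\<lambda>\<omega>. W (ts ! Suc k) \<omega> - W (ts ! k) \<omega>)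
                | Some (True, k) \<Rightarrow> (\<lambda>\<omega>. N (ts ! Suc k) \<omega> - N (ts ! k) \<omega>))
          (insert None {Some (b, k) | b k. Suc k < length ts})"
    using ind unfolding indep_X0_W_N_def by blast
  have s: "insert None {Some (b, k) | b k. Suc k < length ts} = Jset (Suc n)"
    by (auto simp: ts_def Jset_def)
  show ?thesis
    apply (rule prob_space.indep_vars_cong[OF ps, THEN iffD1, OF _ _ _ i])
      apply (rule s)
    subgoal for i
      by (cases i) (auto simp del: upt_Suc simp: incr_def ts_def Jset_def split: bool.splits)
    by simp
qed



lemma (in prob_space) step:
  fixes a b c lam dt :: real and X0 :: "'a \<Rightarrow> real" and W N :: "real \<Rightarrow> 'a \<Rightarrow> real"
  defines "X \<equiv> tamed_euler a b c dt X0 W N"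
  assumes dt: "dt > 0" and lam: "lam > 0"
    and BM: "std_brownian_motion M W" and PP: "poisson_process M lam N"
    and X0m: "X0 \<in> borel_measurable M" and ind: "indep_X0_W_N M X0 W N"
    and int: "integrable M (\<lambda>\<omega>. (X n \<omega>)\<^sup>2)"
  shows "integrable M (\<lambda>\<omega>. (X (Suc n) \<omega>)\<^sup>2) \<and>
    integral\<^sup>L M (\<lambda>\<omega>. (X (Suc n) \<omega>)\<^sup>2) = integral\<^sup>L M (\<lambda>\<omega>. (X n \<omega>)\<^sup>2 *
       ((1 + a * dt / (1 + dt * \<bar>a * X n \<omega>\<bar>) + c * lam * dt)\<^sup>2 + b\<^sup>2 * dt + c\<^sup>2 * lam * dt))"
proof -
  have Wm[measurable]: "(\<lambda>\<omega>. W (real k * dt) \<omega>) \<in> borel_measurable M" for k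
    using BM dt unfolding std_brownian_motion_def by auto
  have Nm[measurable]: "(\<lambda>\<omega>. N (real k * dt) \<omega>) \<in> borel_measurable M" for k
    using PP dt unfolding poisson_process_def by auto
  have incrm: "incr X0 W N dt i \<in> borel_measurable M" for i
    by (cases i) (auto simp del: of_nat_Suc simp: incr_def X0m split: bool.splits)
  have Xm[measurable]: "X k \<in> borel_measurable M" for k
    unfolding X_def by (induction k) (simp_all del: of_nat_Suc add: Let_def X0m)
  define U where "U = (\<lambda>\<omega>. W (real (Suc n) * dt) \<omega> - W (real n * dt) \<omega>)"
  define V where "V = (\<lambda>\<omega>. N (real (Suc n) * dt) \<omega> - N (real n * dt) \<omega>)"
  have Um[measurable]: "U \<in> borel_measurable M" unfolding U_def by (simp del: of_nat_Suc)
  have Vm[measurable]: "V \<in> borel_measurable M" unfolding V_def by (simp del: of_nat_Suc)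
  have diff: "real (Suc n) * dt - real n * dt = dt" by (simp add: algebra_simps)
  have lt: "0 \<le> real n * dt" "real n * dt < real (Suc n) * dt" using dt by (auto simp del: of_nat_Suc)
  have UD: "distributed M lborel U (normal_density 0 (sqrt dt))"
  proof -
    have "distributed M lborel (\<lambda>\<omega>. W (real (Suc n) * dt) \<omega> - W (real n * dt) \<omega>)
       (normal_density 0 (sqrt (real (Suc n) * dt - real n * dt)))"
      using BM lt unfolding std_brownian_motion_def by blast
    then show ?thesis unfolding U_def diff .
  qed
  have sdt: "sqrt dt > 0" using dt by simp
  have U1i: "integrable M U"
    using distributed_integrable[OF UD, of "\<lambda>x. x"] integrable_normal_moment_nz_1[OF sdt, of 0] by simp
  have U1: "integral\<^sup>L M U = 0"
    using distributed_integral[OF UD, of "\<lambda>x. x"] integral_normal_moment_nz_1[OF sdt, of 0] by simp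
  have U2i: "integrable M (\<lambda>\<omega>. (U \<omega>)\<^sup>2)"
    using distributed_integrable[OF UD, of "\<lambda>x. x\<^sup>2"] integrable_normal_moment[OF sdt, of 0 2] by simp
  have U2: "integral\<^sup>L M (\<lambda>\<omega>. (U \<omega>)\<^sup>2) = dt"
    using distributed_integral[OF UD, of "\<lambda>x. x\<^sup>2"] integral_normal_moment_even[OF sdt, of 0 1] dt
    by simp
  define P where "P = poisson_pmf (lam * dt)"
  have r: "lam * dt > 0" using lam dt by simp
  have VD: "distr M borel V = distr (measure_pmf P) borel real"
  proof -
    have "distr M borel (\<lambda>\<omega>. N (real (Suc n) * dt) \<omega> - N (real n * dt) \<omega>)
          = distr (measure_pmf (poisson_pmf (lam * (real (Suc n) * dt - real n * dt)))) borel real"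
      using PP lt unfolding poisson_process_def by blast
    then show ?thesis unfolding V_def P_def diff .
  qed
  have Vint: "integral\<^sup>L M (\<lambda>\<omega>. f (V \<omega>)) = integral\<^sup>L (measure_pmf P) (\<lambda>k. f (real k))"
    if [measurable]: "f \<in> borel_measurable borel" for f :: "real \<Rightarrow> real"
  proof -
    have "integral\<^sup>L M (\<lambda>\<omega>. f (V \<omega>)) = integral\<^sup>L (distr M borel V) f"
      using integral_distr[of V M borel f] by simp
    also have "\<dots> = integral\<^sup>L (distr (measure_pmf P) borel real) f" by (simp add: VD)
    also have "\<dots> = integral\<^sup>L (measure_pmf P) (\<lambda>k. f (real k))"
      using integral_distr[of real "measure_pmf P" borel f] by simp
    finally show ?thesis .
  qed
  have Vintg: "integrable M (\<lambda>\<omega>. f (V \<omega>)) \<longleftrightarrow> integrable (measure_pmf P) (\<lambda>k. f (real k))"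
    if [measurable]: "f \<in> borel_measurable borel" for f :: "real \<Rightarrow> real"
  proof -
    have "integrable M (\<lambda>\<omega>. f (V \<omega>)) \<longleftrightarrow> integrable (distr M borel V) f"
      using integrable_distr_eq[of V M borel f] by simp
    also have "\<dots> \<longleftrightarrow> integrable (distr (measure_pmf P) borel real) f" by (simp add: VD)
    also have "\<dots> \<longleftrightarrow> integrable (measure_pmf P) (\<lambda>k. f (real k))"
      using integrable_distr_eq[of real "measure_pmf P" borel f] by simp
    finally show ?thesis .
  qed
  have p1: "integrable (measure_pmf P) (\<lambda>k. real k)" "integral\<^sup>L (measure_pmf P) (\<lambda>k. real k) = lam * dt"
    using pmf_nat_integral[of "\<lambda>k. real k", OF _ poisson_sums1[OF r]] unfolding P_def by auto
  have p2: "integrable (measure_pmf P) (\<lambda>k. (real k)\<^sup>2)" "integral\<^sup>L (measure_pmf P) (\<lambda>k. (real k)\<^sup>2) = lam * dt + (lam * dt)\<^sup>2"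
    using pmf_nat_integral[of "\<lambda>k. (real k)\<^sup>2", OF _ poisson_sums2[OF r]] unfolding P_def by auto
  have V1i: "integrable M V" using Vintg[of "\<lambda>x. x"] p1 by simp
  have V1: "integral\<^sup>L M V = lam * dt" using Vint[of "\<lambda>x. x"] p1 by simp
  have V2i: "integrable M (\<lambda>\<omega>. (V \<omega>)\<^sup>2)" using Vintg[of "\<lambda>x. x\<^sup>2"] p2 by simp
  have V2: "integral\<^sup>L M (\<lambda>\<omega>. (V \<omega>)\<^sup>2) = lam * dt + (lam * dt)\<^sup>2" using Vint[of "\<lambda>x. x\<^sup>2"] p2 by simp
  define F where "F = incr X0 W N dt"
  define K where "K = {Some (False, n), Some (True, n)}"
  have gi: "indep_vars (\<lambda>_. borel) F (Jset (Suc n))"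
    unfolding F_def by (rule grid_indep[OF prob_space_axioms dt ind])
  have iv: "indep_var (PiM (Jset n) (\<lambda>_. borel)) (\<lambda>\<omega>. restrict (\<lambda>i. F i \<omega>) (Jset n))
      (PiM K (\<lambda>_. borel)) (\<lambda>\<omega>. restrict (\<lambda>i. F i \<omega>) K)"
    by (rule indep_var_restrict[OF gi]) (auto simp: Jset_def K_def)
  have XZ: "X n \<omega> = evs a b c dt (restrict (\<lambda>i. F i \<omega>) (Jset n)) n" for \<omega>
    unfolding X_def F_def by (simp add: tamed_eq evs_restrict)
  have UK: "restrict (\<lambda>i. F i \<omega>) K (Some (False, n)) = U \<omega>" for \<omega>
    by (simp add: K_def F_def incr_def U_def del: of_nat_Suc)
  have VK: "restrict (\<lambda>i. F i \<omega>) K (Some (True, n)) = V \<omega>" for \<omega>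
    by (simp add: K_def F_def incr_def V_def del: of_nat_Suc)
  have indXP: "indep_var borel (\<lambda>\<omega>. \<phi> (X n \<omega>)) borel (\<lambda>\<omega>. \<psi> (b * U \<omega> + c * V \<omega>))"
    if [measurable]: "\<phi> \<in> borel_measurable borel" "\<psi> \<in> borel_measurable borel" for \<phi> \<psi> :: "real \<Rightarrow> real"
  proof -
    have g: "(\<lambda>v. \<phi> (evs a b c dt v n)) \<in> borel_measurable (PiM (Jset n) (\<lambda>_. borel))"
      using measurable_compose[OF evs_meas[of n "Jset n" a b c dt] that(1)] by simp
    have kk[measurable]: "Some (False, n) \<in> K" "Some (True, n) \<in> K" by (auto simp: K_def)
    have FU: "F (Some (False, n)) \<omega> = U \<omega>" "F (Some (True, n)) \<omega> = V \<omega>" for \<omega>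
      using UK[of \<omega>] VK[of \<omega>] kk by auto
    have h: "(\<lambda>v. \<psi> (b * v (Some (False, n)) + c * v (Some (True, n)))) \<in> borel_measurable (PiM K (\<lambda>_. borel))"
      by measurable
    show ?thesis
      using indep_var_compose[OF iv g h] by (simp add: comp_def XZ kk FU)
  qed
  have indUV: "indep_var borel U borel V"
  proof -
    have iv2: "indep_var (PiM {Some (False, n)} (\<lambda>_. borel)) (\<lambda>\<omega>. restrict (\<lambda>i. F i \<omega>) {Some (False, n)})
      (PiM {Some (True, n)} (\<lambda>_. borel)) (\<lambda>\<omega>. restrict (\<lambda>i. F i \<omega>) {Some (True, n)})"
      by (rule indep_var_restrict[OF gi]) (auto simp: Jset_def)
    have m1: "(\<lambda>v. v (Some (False, n))) \<in> borel_measurable (PiM {Some (False, n)} (\<lambda>_. borel))" by simp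
    have m2: "(\<lambda>v. v (Some (True, n))) \<in> borel_measurable (PiM {Some (True, n)} (\<lambda>_. borel))" by simp
    have e1: "(\<lambda>v. v (Some (False, n))) \<circ> (\<lambda>\<omega>. restrict (\<lambda>i. F i \<omega>) {Some (False, n)}) = U"
      by (auto simp: F_def incr_def U_def del: of_nat_Suc)
    have e2: "(\<lambda>v. v (Some (True, n))) \<circ> (\<lambda>\<omega>. restrict (\<lambda>i. F i \<omega>) {Some (True, n)}) = V"
      by (auto simp: F_def incr_def V_def del: of_nat_Suc)
    show ?thesis using indep_var_compose[OF iv2 m1 m2] unfolding e1 e2 .
  qed
  define th where "th = (\<lambda>\<omega>. a * dt / (1 + dt * \<bar>a * X n \<omega>\<bar>))"
  have th_meas[measurable]: "th \<in> borel_measurable M" unfolding th_def by measurable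
  have thb: "\<bar>1 + th \<omega>\<bar> \<le> 1 + \<bar>a\<bar> * dt" for \<omega>
  proof -
    have D: "1 \<le> 1 + dt * \<bar>a * X n \<omega>\<bar>" using dt by simp
    have "\<bar>th \<omega>\<bar> = \<bar>a\<bar> * dt / (1 + dt * \<bar>a * X n \<omega>\<bar>)"
      unfolding th_def using dt D by (simp add: abs_mult)
    also have "\<dots> \<le> \<bar>a\<bar> * dt / 1" 
    proof (rule divide_left_mono)
      show "1 \<le> 1 + dt * \<bar>a * X n \<omega>\<bar>" using D .
      show "0 \<le> \<bar>a\<bar> * dt" using dt by simp
      show "0 < (1 + dt * \<bar>a * X n \<omega>\<bar>) * 1" unfolding mult_1_right by (rule order_less_le_trans[OF zero_less_one D])
    qed
    finally show ?thesis by linarith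
  qed
  define A where "A = (\<lambda>\<omega>. (X n \<omega>)\<^sup>2 * (1 + th \<omega>)\<^sup>2)"
  define B where "B = (\<lambda>\<omega>. (X n \<omega>)\<^sup>2 * (1 + th \<omega>))"
  define C where "C = (\<lambda>\<omega>. (X n \<omega>)\<^sup>2)"
  define PP' where "PP' = (\<lambda>\<omega>. b * U \<omega> + c * V \<omega>)"
  define Q where "Q = (\<lambda>\<omega>. (b * U \<omega> + c * V \<omega>)\<^sup>2)"
  have XS: "X (Suc n) \<omega> = X n \<omega> * (1 + th \<omega> + b * U \<omega> + c * V \<omega>)" for \<omega>
  proof -
    have "X (Suc n) \<omega> = X n \<omega> + a * X n \<omega> * dt / (1 + dt * \<bar>a * X n \<omega>\<bar>) + b * X n \<omega> * U \<omega> + c * X n \<omega> * V \<omega>"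
      unfolding X_def U_def V_def by (simp add: Let_def del: of_nat_Suc)
    also have "a * X n \<omega> * dt / (1 + dt * \<bar>a * X n \<omega>\<bar>) = X n \<omega> * th \<omega>"
      unfolding th_def by simp
    finally show ?thesis by (simp add: algebra_simps)
  qed
  have eq: "(X (Suc n) \<omega>)\<^sup>2 = A \<omega> + 2 * (B \<omega> * PP' \<omega>) + C \<omega> * Q \<omega>" for \<omega>
    unfolding XS A_def B_def C_def PP'_def Q_def by (simp add: power2_eq_square algebra_simps)
  have Ci: "integrable M C" using int unfolding C_def .
  have Ai: "integrable M A"
  proof (rule Bochner_Integration.integrable_bound[OF integrable_mult_left[OF Ci, of "(1 + \<bar>a\<bar> * dt)\<^sup>2"]])
    show "A \<in> borel_measurable M" unfolding A_def by measurable
    show "AE x in M. norm (A x) \<le> norm (C x * (1 + \<bar>a\<bar> * dt)\<^sup>2)"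
    proof (rule AE_I2)
      fix x
      have "(1 + th x)\<^sup>2 \<le> (1 + \<bar>a\<bar> * dt)\<^sup>2"
        using thb[of x] by (metis abs_le_square_iff abs_of_nonneg order_trans abs_ge_zero power2_abs)
      then show "norm (A x) \<le> norm (C x * (1 + \<bar>a\<bar> * dt)\<^sup>2)"
        unfolding A_def C_def by (simp add: abs_mult mult_left_mono mult.commute)
    qed
  qed
  have Bi: "integrable M B"
  proof (rule Bochner_Integration.integrable_bound[OF integrable_mult_left[OF Ci, of "1 + \<bar>a\<bar> * dt"]])
    show "B \<in> borel_measurable M" unfolding B_def by measurable
    show "AE x in M. norm (B x) \<le> norm (C x * (1 + \<bar>a\<bar> * dt))"
    proof (rule AE_I2)
      fix x
      show "norm (B x) \<le> norm (C x * (1 + \<bar>a\<bar> * dt))"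
        using mult_right_mono[OF thb[of x] zero_le_power2[of "X n x"]] dt unfolding B_def C_def
        by (simp add: abs_mult mult.commute)
    qed
  qed
  have Pi: "integrable M PP'" unfolding PP'_def using U1i V1i by simp
  have EP: "integral\<^sup>L M PP' = c * (lam * dt)" unfolding PP'_def using U1i V1i U1 V1 by simp
  have indUV': "indep_var borel (\<lambda>\<omega>. U \<omega>) borel (\<lambda>\<omega>. V \<omega>)" using indUV by simp
  have UVi: "integrable M (\<lambda>\<omega>. U \<omega> * V \<omega>)" using indep_var_integrable[OF indUV U1i V1i] .
  have EUV: "integral\<^sup>L M (\<lambda>\<omega>. U \<omega> * V \<omega>) = 0" using indep_var_lebesgue_integral[OF indUV U1i V1i] U1 by simp
  have Qexp: "Q = (\<lambda>\<omega>. b\<^sup>2 * (U \<omega>)\<^sup>2 + (2 * b * c * (U \<omega> * V \<omega>) + c\<^sup>2 * (V \<omega>)\<^sup>2))"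
    unfolding Q_def by (auto simp: fun_eq_iff power2_eq_square algebra_simps)
  have Qi: "integrable M Q" unfolding Qexp
    by (intro Bochner_Integration.integrable_add Bochner_Integration.integrable_mult_right U2i V2i UVi)
  have EQ: "integral\<^sup>L M Q = b\<^sup>2 * dt + c\<^sup>2 * (lam * dt + (lam * dt)\<^sup>2)"
  proof -
    have "integral\<^sup>L M (\<lambda>\<omega>. b\<^sup>2 * (U \<omega>)\<^sup>2 + (2 * b * c * (U \<omega> * V \<omega>) + c\<^sup>2 * (V \<omega>)\<^sup>2))
       = b\<^sup>2 * integral\<^sup>L M (\<lambda>\<omega>. (U \<omega>)\<^sup>2) + (2 * b * c * integral\<^sup>L M (\<lambda>\<omega>. U \<omega> * V \<omega>) + c\<^sup>2 * integral\<^sup>L M (\<lambda>\<omega>. (V \<omega>)\<^sup>2))"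
      by (subst Bochner_Integration.integral_add, (intro Bochner_Integration.integrable_add Bochner_Integration.integrable_mult_right U2i V2i UVi)+,
          subst Bochner_Integration.integral_add, (intro Bochner_Integration.integrable_add Bochner_Integration.integrable_mult_right U2i V2i UVi)+,
          simp only: integral_mult_right_zero)
    then show ?thesis unfolding Qexp U2 V2 EUV by simp
  qed
  have iBP: "indep_var borel B borel PP'"
  proof -
    have "indep_var borel (\<lambda>\<omega>. (\<lambda>x. x\<^sup>2 * (1 + a * dt / (1 + dt * \<bar>a * x\<bar>))) (X n \<omega>))
        borel (\<lambda>\<omega>. (\<lambda>y. y) (b * U \<omega> + c * V \<omega>))"
      by (rule indXP) measurable
    then show ?thesis unfolding B_def th_def PP'_def by (simp only:)
  qed
  have iCQ: "indep_var borel C borel Q"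
  proof -
    have "indep_var borel (\<lambda>\<omega>. (\<lambda>x. x\<^sup>2) (X n \<omega>))
        borel (\<lambda>\<omega>. (\<lambda>y. y\<^sup>2) (b * U \<omega> + c * V \<omega>))"
      by (rule indXP) measurable
    then show ?thesis unfolding C_def Q_def by (simp only:)
  qed
  have BPi: "integrable M (\<lambda>\<omega>. B \<omega> * PP' \<omega>)" using indep_var_integrable[OF iBP Bi Pi] .
  have CQi: "integrable M (\<lambda>\<omega>. C \<omega> * Q \<omega>)" using indep_var_integrable[OF iCQ Ci Qi] .
  have EBP: "integral\<^sup>L M (\<lambda>\<omega>. B \<omega> * PP' \<omega>) = integral\<^sup>L M B * (c * (lam * dt))"
    using indep_var_lebesgue_integral[OF iBP Bi Pi] unfolding EP .
  have ECQ: "integral\<^sup>L M (\<lambda>\<omega>. C \<omega> * Q \<omega>) = integral\<^sup>L M C * (b\<^sup>2 * dt + c\<^sup>2 * (lam * dt + (lam * dt)\<^sup>2))"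
    using indep_var_lebesgue_integral[OF iCQ Ci Qi] unfolding EQ .
  have fin1: "integrable M (\<lambda>\<omega>. (X (Suc n) \<omega>)\<^sup>2)"
    unfolding eq by (intro Bochner_Integration.integrable_add Bochner_Integration.integrable_mult_right Ai BPi CQi)
  have "integral\<^sup>L M (\<lambda>\<omega>. (X (Suc n) \<omega>)\<^sup>2) = integral\<^sup>L M A + 2 * (integral\<^sup>L M B * (c * (lam * dt)))
      + integral\<^sup>L M C * (b\<^sup>2 * dt + c\<^sup>2 * (lam * dt + (lam * dt)\<^sup>2))"
    unfolding eq
    by (subst Bochner_Integration.integral_add, (intro Bochner_Integration.integrable_add Bochner_Integration.integrable_mult_right Ai BPi CQi)+,
          subst Bochner_Integration.integral_add, (intro Bochner_Integration.integrable_add Bochner_Integration.integrable_mult_right Ai BPi CQi)+,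
          simp only: integral_mult_right_zero EBP ECQ)
  also have "\<dots> = integral\<^sup>L M (\<lambda>\<omega>. A \<omega> + (2 * (c * (lam * dt))) * B \<omega>
      + (b\<^sup>2 * dt + c\<^sup>2 * (lam * dt + (lam * dt)\<^sup>2)) * C \<omega>)"
    by (subst Bochner_Integration.integral_add, (intro Bochner_Integration.integrable_add Bochner_Integration.integrable_mult_right Ai Bi Ci)+,
          subst Bochner_Integration.integral_add, (intro Bochner_Integration.integrable_add Bochner_Integration.integrable_mult_right Ai Bi Ci)+,
          simp only: integral_mult_right_zero, simp add: algebra_simps)
  also have "\<dots> = integral\<^sup>L M (\<lambda>\<omega>. (X n \<omega>)\<^sup>2 *
       ((1 + th \<omega> + c * lam * dt)\<^sup>2 + b\<^sup>2 * dt + c\<^sup>2 * lam * dt))"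
    unfolding A_def B_def C_def
    by (rule Bochner_Integration.integral_cong) (simp_all add: power2_eq_square algebra_simps)
  finally show ?thesis using fin1 unfolding th_def by simp
qed



lemma R_bound:
  fixes a b c lam dt x :: real
  assumes dt: "dt > 0"
  shows "(1 + a * dt / (1 + dt * \<bar>a * x\<bar>) + c * lam * dt)\<^sup>2 + b\<^sup>2 * dt + c\<^sup>2 * lam * dt
     \<le> max ((1 + 0 + c * lam * dt)\<^sup>2 + b\<^sup>2 * dt + c\<^sup>2 * lam * dt)
            ((1 + a * dt + c * lam * dt)\<^sup>2 + b\<^sup>2 * dt + c\<^sup>2 * lam * dt)"
proof -
  define D where "D = 1 + dt * \<bar>a * x\<bar>"
  have D1: "D \<ge> 1" unfolding D_def using dt by simp
  define t where "t = 1 / D"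
  have t0: "0 \<le> t" and t1: "t \<le> 1" unfolding t_def using D1 by auto
  have th: "a * dt / (1 + dt * \<bar>a * x\<bar>) = t * (a * dt)" unfolding t_def D_def by simp
  define s where "s = 1 + c * lam * dt"
  define K where "K = b\<^sup>2 * dt + c\<^sup>2 * lam * dt"
  have e1: "1 + t * (a * dt) + c * lam * dt = s + t * (a * dt)" unfolding s_def by simp
  have "(s + t * (a * dt))\<^sup>2 \<le> (1 - t) * s\<^sup>2 + t * (s + a * dt)\<^sup>2"
    by (rule convex_sq[OF t0 t1])
  then have "(s + t * (a * dt))\<^sup>2 + K \<le> (1 - t) * (s\<^sup>2 + K) + t * ((s + a * dt)\<^sup>2 + K)"
    by (simp add: algebra_simps)
  also have "\<dots> \<le> (1 - t) * max (s\<^sup>2 + K) ((s + a * dt)\<^sup>2 + K) + t * max (s\<^sup>2 + K) ((s + a * dt)\<^sup>2 + K)"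
    using t0 t1 by (intro add_mono mult_left_mono) auto
  also have "\<dots> = max (s\<^sup>2 + K) ((s + a * dt)\<^sup>2 + K)" by (simp add: algebra_simps)
  finally have fin: "(s + t * (a * dt))\<^sup>2 + K \<le> max (s\<^sup>2 + K) ((s + a * dt)\<^sup>2 + K)" .
  have e0: "1 + 0 + c * lam * dt = s" and e2: "1 + a * dt + c * lam * dt = s + a * dt" unfolding s_def by simp_all
  show ?thesis unfolding th e1 e0 e2 using fin unfolding K_def by (simp only: add.assoc)
qed

theorem mainTheorem2:
  fixes M :: "'a measure" and a b c lam dt :: real
    and X0 :: "'a \<Rightarrow> real" and W N :: "real \<Rightarrow> 'a \<Rightarrow> real"
  assumes "prob_space M"
    and "lam > 0" and "dt > 0"
    and "std_brownian_motion M W"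
    and "poisson_process M lam N"
    and "X0 \<in> borel_measurable M"
    and "integrable M (\<lambda>\<omega>. (X0 \<omega>)\<^sup>2)"
    and "indep_X0_W_N M X0 W N"
    and "2 * a + b\<^sup>2 + lam * c * (2 + c) < 0"
    and "(a * (1 + lam * c * dt) \<le> 0 \<and>
          2 * a - (2 * a + b\<^sup>2 + lam * c * (2 + c)) > 0 \<and>
          dt < (2 * a - (2 * a + b\<^sup>2 + lam * c * (2 + c))) / (a\<^sup>2 + lam\<^sup>2 * c\<^sup>2))
       \<or> (a * (1 + lam * c * dt) > 0 \<and>
          dt < - (2 * a + b\<^sup>2 + lam * c * (2 + c)) / (a + lam * c)\<^sup>2)"
  shows "(\<lambda>n. integral\<^sup>L M (\<lambda>\<omega>. (tamed_euler a b c dt X0 W N n \<omega>)\<^sup>2)) \<longlonglongrightarrow> 0"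
proof -
  interpret prob_space M by fact
  define X where "X = tamed_euler a b c dt X0 W N"
  define R0 where "R0 = (1 + 0 + c * lam * dt)\<^sup>2 + b\<^sup>2 * dt + c\<^sup>2 * lam * dt"
  define R1 where "R1 = (1 + a * dt + c * lam * dt)\<^sup>2 + b\<^sup>2 * dt + c\<^sup>2 * lam * dt"
  define \<rho> where "\<rho> = max R0 R1"
  have c1: "R0 < 1" "R1 < 1"
    using contraction[OF assms(2,3,10)] unfolding R0_def R1_def by simp_all
  have \<rho>1: "\<rho> < 1" unfolding \<rho>_def using c1 by simp
  have R00: "0 \<le> R0" unfolding R0_def using assms(2,3) by simp
  have \<rho>0: "0 \<le> \<rho>" unfolding \<rho>_def using R00 by simp
  have ind: "integrable M (\<lambda>\<omega>. (X n \<omega>)\<^sup>2) \<and>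
       integral\<^sup>L M (\<lambda>\<omega>. (X n \<omega>)\<^sup>2) \<le> \<rho> ^ n * integral\<^sup>L M (\<lambda>\<omega>. (X 0 \<omega>)\<^sup>2)" for n
  proof (induction n)
    case 0
    then show ?case using assms(7) unfolding X_def by simp
  next
    case (Suc n)
    have st: "integrable M (\<lambda>\<omega>. (X (Suc n) \<omega>)\<^sup>2) \<and>
      integral\<^sup>L M (\<lambda>\<omega>. (X (Suc n) \<omega>)\<^sup>2) = integral\<^sup>L M (\<lambda>\<omega>. (X n \<omega>)\<^sup>2 *
       ((1 + a * dt / (1 + dt * \<bar>a * X n \<omega>\<bar>) + c * lam * dt)\<^sup>2 + b\<^sup>2 * dt + c\<^sup>2 * lam * dt))"
      unfolding X_def
      by (rule step[OF assms(3,2,4,5,6,8)]) (use Suc.IH in \<open>simp add: X_def\<close>)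
    have "integral\<^sup>L M (\<lambda>\<omega>. (X n \<omega>)\<^sup>2 *
       ((1 + a * dt / (1 + dt * \<bar>a * X n \<omega>\<bar>) + c * lam * dt)\<^sup>2 + b\<^sup>2 * dt + c\<^sup>2 * lam * dt))
       \<le> integral\<^sup>L M (\<lambda>\<omega>. (X n \<omega>)\<^sup>2 * \<rho>)"
    proof (rule integral_mono')
      show "integrable M (\<lambda>\<omega>. (X n \<omega>)\<^sup>2 * \<rho>)" using Suc.IH by simp
      fix \<omega>
      show "0 \<le> (X n \<omega>)\<^sup>2 * \<rho>" using \<rho>0 by simp
      show "(X n \<omega>)\<^sup>2 * ((1 + a * dt / (1 + dt * \<bar>a * X n \<omega>\<bar>) + c * lam * dt)\<^sup>2 + b\<^sup>2 * dt + c\<^sup>2 * lam * dt)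
         \<le> (X n \<omega>)\<^sup>2 * \<rho>"
        using R_bound[OF assms(3), where x="X n \<omega>" and a=a and b=b and c=c and lam=lam] unfolding \<rho>_def R0_def R1_def
        by (intro mult_left_mono) auto
    qed
    also have "\<dots> = \<rho> * integral\<^sup>L M (\<lambda>\<omega>. (X n \<omega>)\<^sup>2)" by simp
    also have "\<dots> \<le> \<rho> * (\<rho> ^ n * integral\<^sup>L M (\<lambda>\<omega>. (X 0 \<omega>)\<^sup>2))"
      using Suc.IH \<rho>0 by (intro mult_left_mono) auto
    finally show ?case using st by simp
  qed
  have "(\<lambda>n. \<rho> ^ n * integral\<^sup>L M (\<lambda>\<omega>. (X 0 \<omega>)\<^sup>2)) \<longlonglongrightarrow> 0 * integral\<^sup>L M (\<lambda>\<omega>. (X 0 \<omega>)\<^sup>2)"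
    by (intro tendsto_mult LIMSEQ_power_zero tendsto_const) (use \<rho>0 \<rho>1 in simp)
  then have lim: "(\<lambda>n. \<rho> ^ n * integral\<^sup>L M (\<lambda>\<omega>. (X 0 \<omega>)\<^sup>2)) \<longlonglongrightarrow> 0" by simp
  have "(\<lambda>n. integral\<^sup>L M (\<lambda>\<omega>. (X n \<omega>)\<^sup>2)) \<longlonglongrightarrow> 0"
    by (rule tendsto_sandwich[OF _ _ tendsto_const lim]) (use ind in \<open>auto intro: always_eventually\<close>)
  then show ?thesis unfolding X_def .
qed

end
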